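(* Let $r(x;m)$, $x\in\mathbb C^*$, $m=0,1,2,\ldots$, be functions satisfying $r(x;0)=1$ identically and $r(qx;m)=\sum_{i=0}^m(-1)^i\binom{m}{i}r(x;m-i)$ for all $x$ and $m$. For $n\ge1$ define $$R(t_1,\ldots,t_n\,|\,t_0)=\sum_{\gamma\in\Gamma_n}(-1)^{n+\ell(\gamma)}\prod_{k=1}^{\ell(\gamma)}r\Big(\prod_{i\in\upsilon(\gamma)_k}t_i\,;\,\#\gamma_k\Big),\qquad \upsilon(\gamma)_k=\{0\}\cup\gamma_1\cup\cdots\cup\gamma_{k-1}.$$ Then $$R(qt_1,t_2,\ldots,t_n\,|\,t_0)=\sum_{\pi\in\Pi^\circ_n}(-1)^{n+\ell(\pi)}R^\pi(t_1,\ldots,t_n\,|\,t_0),$$ where for $\pi=\{\pi_1,\ldots,\pi_\ell\}$, $R^\pi(t\,|\,t_0)=R\big(\prod_{k\in\pi_1}t_k,\ldots,\prod_{k\in\pi_\ell}t_k\,\big|\,t_0\big)$.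
   Context: $q$ is a fixed nonzero complex number and $t_0$ an auxiliary variable. $\Gamma_n$ is the set of compositions of $\{1,\ldots,n\}$: ordered tuples $\gamma=(\gamma_1,\ldots,\gamma_\ell)$ of nonempty, pairwise disjoint subsets with union $\{1,\ldots,n\}$; $\ell(\gamma)=\ell$. $\Pi_n$ is the set of (unordered) set partitions $\pi=\{\pi_1,\ldots,\pi_\ell\}$ of $\{1,\ldots,n\}$ into nonempty blocks, $\ell(\pi)=\ell$. $\Pi^\circ_n\subset\Pi_n$ consists of partitions having at most one block of cardinality $>1$, such a block (if present) containing $1$. ($R$ is symmetric in $t_1,\ldots,t_n$, so $R^\pi$ does not depend on the ordering of blocks.) *)

theory Defs
  imports Complex_Main "HOL-Library.Disjoint_Sets"
begin

definition compositions :: "nat \<Rightarrow> nat set list set" where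
  "compositions n = {\<gamma>. (\<forall>b\<in>set \<gamma>. b \<noteq> {}) \<and>
      (\<forall>i<length \<gamma>. \<forall>j<length \<gamma>. i \<noteq> j \<longrightarrow> \<gamma> ! i \<inter> \<gamma> ! j = {}) \<and>
      \<Union>(set \<gamma>) = {1..n}}"

definition set_partitions :: "nat \<Rightarrow> nat set set set" where
  "set_partitions n = {\<pi>. partition_on {1..n} \<pi>}"

definition set_partitions_circ :: "nat \<Rightarrow> nat set set set" where
  "set_partitions_circ n = {\<pi> \<in> set_partitions n.
      (\<forall>b\<in>\<pi>. \<forall>c\<in>\<pi>. card b > 1 \<and> card c > 1 \<longrightarrow> b = c) \<and>
      (\<forall>b\<in>\<pi>. card b > 1 \<longrightarrow> 1 \<in> b)}"

text \<open>The k-th block (0-indexed) of \<gamma> gets argument prod over {0} \<union> \<gamma>_0 \<union> ... \<union> \<gamma>_(k-1).\<close>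
definition Rfun :: "(complex \<Rightarrow> nat \<Rightarrow> complex) \<Rightarrow> nat \<Rightarrow> (nat \<Rightarrow> complex) \<Rightarrow> complex \<Rightarrow> complex" where
  "Rfun r n t t0 = (\<Sum>\<gamma>\<in>compositions n.
      (-1) ^ (n + length \<gamma>) *
      (\<Prod>k<length \<gamma>. r (\<Prod>i\<in>insert 0 (\<Union>(set (take k \<gamma>))). (if i = 0 then t0 else t i))
                        (card (\<gamma> ! k))))"

text \<open>R^\<pi>: blocks of \<pi> are ordered by their minimum element (R is symmetric, so the
  ordering is immaterial); the j-th variable (j = 1..card \<pi>) is the product of t over the j-th block.\<close>
definition Rpart :: "(complex \<Rightarrow> nat \<Rightarrow> complex) \<Rightarrow> nat set set \<Rightarrow> (nat \<Rightarrow> complex) \<Rightarrow> complex \<Rightarrow> complex" where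
  "Rpart r \<pi> t t0 = (let bs = sorted_key_list_of_set Min \<pi> in
      Rfun r (card \<pi>) (\<lambda>j. \<Prod>k\<in>bs ! (j - 1). t k) t0)"

end

theory Submission
  imports Defs
begin


definition comps :: "'a set \<Rightarrow> 'a set list set" where
  "comps X = {\<gamma>. (\<forall>b\<in>set \<gamma>. b \<noteq> {}) \<and>
      (\<forall>i<length \<gamma>. \<forall>j<length \<gamma>. i \<noteq> j \<longrightarrow> \<gamma> ! i \<inter> \<gamma> ! j = {}) \<and>
      \<Union>(set \<gamma>) = X}"

definition W :: "(complex \<Rightarrow> nat \<Rightarrow> complex) \<Rightarrow> ('a \<Rightarrow> complex) \<Rightarrow> complex \<Rightarrow> 'a set \<Rightarrow> complex" where
  "W r g c X = (\<Sum>\<gamma>\<in>comps X. (-1) ^ (card X + length \<gamma>) *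
      (\<Prod>k<length \<gamma>. r (c * (\<Prod>i\<in>\<Union>(set (take k \<gamma>)). g i)) (card (\<gamma> ! k))))"

lemma disj_Cons:
  "(\<forall>i<length (B#\<gamma>). \<forall>j<length (B#\<gamma>). i \<noteq> j \<longrightarrow> (B#\<gamma>) ! i \<inter> (B#\<gamma>) ! j = {}) \<longleftrightarrow>
   (\<forall>b\<in>set \<gamma>. B \<inter> b = {}) \<and> (\<forall>i<length \<gamma>. \<forall>j<length \<gamma>. i \<noteq> j \<longrightarrow> \<gamma> ! i \<inter> \<gamma> ! j = {})"
  (is "?L \<longleftrightarrow> ?R")
proof
  assume L: ?L
  have R1: "B \<inter> b = {}" if "b \<in> set \<gamma>" for b
  proof -
    from that obtain j where j: "j < length \<gamma>" "\<gamma> ! j = b" unfolding in_set_conv_nth by (elim exE conjE) simp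
    have "(B#\<gamma>) ! 0 \<inter> (B#\<gamma>) ! Suc j = {}" by (rule L[rule_format]) (use j(1) in simp_all)
    then show ?thesis using j(2) by simp
  qed
  have R2: "\<gamma> ! i \<inter> \<gamma> ! j = {}" if "i < length \<gamma>" "j < length \<gamma>" "i \<noteq> j" for i j
  proof -
    have "(B#\<gamma>) ! Suc i \<inter> (B#\<gamma>) ! Suc j = {}" by (rule L[rule_format]) (use that in simp_all)
    then show ?thesis by simp
  qed
  show ?R by (simp add: R1 R2)
next
  assume R: ?R
  have R1: "B \<inter> b = {}" if "b \<in> set \<gamma>" for b by (rule bspec[OF conjunct1[OF R] that])
  have R2: "\<gamma> ! i \<inter> \<gamma> ! j = {}" if "i < length \<gamma>" "j < length \<gamma>" "i \<noteq> j" for i j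
    using conjunct2[OF R] that by simp
  show ?L
  proof (intro allI impI)
    fix i j assume ij: "i < length (B#\<gamma>)" "j < length (B#\<gamma>)" "i \<noteq> j"
    show "(B#\<gamma>) ! i \<inter> (B#\<gamma>) ! j = {}"
    proof (cases i)
      case 0
      then obtain j' where j': "j = Suc j'" using ij by (cases j) auto
      then have "j' < length \<gamma>" using ij by simp
      then have "B \<inter> \<gamma> ! j' = {}" by (rule R1[OF nth_mem])
      then show ?thesis using 0 j' by simp
    next
      case (Suc i')
      then have i': "i' < length \<gamma>" using ij by simp
      show ?thesis
      proof (cases j)
        case 0
        have "B \<inter> \<gamma> ! i' = {}" by (rule R1[OF nth_mem[OF i']])
        then show ?thesis using Suc 0 by (simp add: Int_commute)
      next
        case (Suc j')
        then have "j' < length \<gamma>" "i' \<noteq> j'" using ij \<open>i = Suc i'\<close> by auto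
        then have "\<gamma> ! i' \<inter> \<gamma> ! j' = {}" using R2 i' by simp
        then show ?thesis using Suc \<open>i = Suc i'\<close> by simp
      qed
    qed
  qed
qed

lemma comps_empty: "comps {} = {[]}"
proof (rule set_eqI)
  fix \<gamma> :: "'a set list"
  show "\<gamma> \<in> comps {} \<longleftrightarrow> \<gamma> \<in> {[]}" unfolding comps_def by (cases \<gamma>) auto
qed

lemma comps_rec:
  assumes "X \<noteq> {}"
  shows "comps X = (\<lambda>(B,\<gamma>). B#\<gamma>) ` (SIGMA B:{B. B \<subseteq> X \<and> B \<noteq> {}}. comps (X - B))"
proof (rule set_eqI iffI)+
  fix \<delta> assume "\<delta> \<in> comps X"
  then have d: "\<forall>b\<in>set \<delta>. b \<noteq> {}" "\<forall>i<length \<delta>. \<forall>j<length \<delta>. i \<noteq> j \<longrightarrow> \<delta> ! i \<inter> \<delta> ! j = {}"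
     "\<Union>(set \<delta>) = X" by (auto simp: comps_def)
  then obtain B \<gamma> where \<delta>: "\<delta> = B#\<gamma>" using assms by (cases \<delta>) auto
  have dj: "\<forall>b\<in>set \<gamma>. B \<inter> b = {}" "\<forall>i<length \<gamma>. \<forall>j<length \<gamma>. i \<noteq> j \<longrightarrow> \<gamma> ! i \<inter> \<gamma> ! j = {}"
    using d(2) unfolding \<delta> disj_Cons by auto
  have "\<gamma> \<in> comps (X - B)" using d dj unfolding comps_def \<delta> by auto
  moreover have "B \<subseteq> X \<and> B \<noteq> {}" using d unfolding \<delta> by auto
  ultimately show "\<delta> \<in> (\<lambda>(B,\<gamma>). B#\<gamma>) ` (SIGMA B:{B. B \<subseteq> X \<and> B \<noteq> {}}. comps (X - B))"
    using \<delta> by force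
next
  fix \<delta> assume "\<delta> \<in> (\<lambda>(B,\<gamma>). B#\<gamma>) ` (SIGMA B:{B. B \<subseteq> X \<and> B \<noteq> {}}. comps (X - B))"
  then obtain B \<gamma> where \<delta>: "\<delta> = B#\<gamma>" and B: "B \<subseteq> X" "B \<noteq> {}" and g: "\<gamma> \<in> comps (X - B)" by auto
  have "\<forall>b\<in>set \<gamma>. B \<inter> b = {}" using g by (auto simp: comps_def)
  then have dj: "\<forall>i<length (B#\<gamma>). \<forall>j<length (B#\<gamma>). i \<noteq> j \<longrightarrow> (B#\<gamma>) ! i \<inter> (B#\<gamma>) ! j = {}"
    using g unfolding disj_Cons comps_def by auto
  have "\<Union>(set (B#\<gamma>)) = X" "\<forall>b\<in>set (B#\<gamma>). b \<noteq> {}" using g B by (auto simp: comps_def)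
  then show "\<delta> \<in> comps X" using dj unfolding \<delta> comps_def by blast
qed

lemma card_diff_less: "finite X \<Longrightarrow> B \<subseteq> X \<Longrightarrow> B \<noteq> {} \<Longrightarrow> card (X - B) < card X"
proof -
  assume a: "finite X" "B \<subseteq> X" "B \<noteq> {}"
  from a(1,2) have "finite B" by (rule rev_finite_subset)
  then have "card B > 0" using a by auto
  moreover have "card (X - B) = card X - card B" using a \<open>finite B\<close> by (simp add: card_Diff_subset)
  moreover have "card B \<le> card X" using a by (simp add: card_mono)
  ultimately show ?thesis by linarith
qed

lemma card_split: "finite X \<Longrightarrow> B \<subseteq> X \<Longrightarrow> card X = card B + card (X - B)"
  by (metis card_Diff_subset card_mono le_add_diff_inverse rev_finite_subset)

lemma finite_comps: "finite X \<Longrightarrow> finite (comps X)"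
proof (induction "card X" arbitrary: X rule: less_induct)
  case less
  show ?case
  proof (cases "X = {}")
    case True then show ?thesis by (simp add: comps_empty)
  next
    case False
    have "finite (SIGMA B:{B. B \<subseteq> X \<and> B \<noteq> {}}. comps (X - B))"
    proof (rule finite_SigmaI)
      show "finite {B. B \<subseteq> X \<and> B \<noteq> {}}" using less.prems by simp
      fix B assume "B \<in> {B. B \<subseteq> X \<and> B \<noteq> {}}"
      then have "card (X - B) < card X" using less.prems card_diff_less by blast
      then show "finite (comps (X - B))" using less by simp
    qed
    then show ?thesis using comps_rec[OF False] by simp
  qed
qed

lemma W_empty: "W r g c {} = 1"
  by (simp add: W_def comps_empty)


lemma W_rec:
  assumes X: "finite X" "X \<noteq> {}"
  shows "W r g c X = (\<Sum>B\<in>{B. B \<subseteq> X \<and> B \<noteq> {}}. (-1) ^ (card B + 1) * r c (card B) *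
            W r g (c * (\<Prod>i\<in>B. g i)) (X - B))"
proof -
  let ?F = "\<lambda>\<gamma>. (-1) ^ (card X + length \<gamma>) *
      (\<Prod>k<length \<gamma>. r (c * (\<Prod>i\<in>\<Union>(set (take k \<gamma>)). g i)) (card (\<gamma> ! k)))"
  have inj: "inj_on (\<lambda>(B,\<gamma>). B#\<gamma>) (SIGMA B:{B. B \<subseteq> X \<and> B \<noteq> {}}. comps (X - B))"
    by (auto simp: inj_on_def)
  have "W r g c X = (\<Sum>(B,\<gamma>)\<in>(SIGMA B:{B. B \<subseteq> X \<and> B \<noteq> {}}. comps (X - B)). ?F (B#\<gamma>))"
    unfolding W_def comps_rec[OF X(2)] by (subst sum.reindex[OF inj]) (simp add: case_prod_unfold)
  also have "\<dots> = (\<Sum>B\<in>{B. B \<subseteq> X \<and> B \<noteq> {}}. \<Sum>\<gamma>\<in>comps (X - B). ?F (B#\<gamma>))"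
    by (rule sum.Sigma[symmetric]) (auto intro: finite_comps X finite_subset[of _ "Pow X"])
  also have "\<dots> = (\<Sum>B\<in>{B. B \<subseteq> X \<and> B \<noteq> {}}. (-1) ^ (card B + 1) * r c (card B) *
            W r g (c * (\<Prod>i\<in>B. g i)) (X - B))"
  proof (rule sum.cong[OF refl])
    fix B assume B: "B \<in> {B. B \<subseteq> X \<and> B \<noteq> {}}"
    have cX: "card X = card B + card (X - B)"
      using B X card_split by blast
    show "(\<Sum>\<gamma>\<in>comps (X - B). ?F (B#\<gamma>)) = (-1) ^ (card B + 1) * r c (card B) *
            W r g (c * (\<Prod>i\<in>B. g i)) (X - B)"
      unfolding W_def sum_distrib_left
    proof (rule sum.cong[OF refl])
      fix \<gamma> assume g: "\<gamma> \<in> comps (X - B)"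
      have sub: "\<And>k. \<Union>(set (take k \<gamma>)) \<subseteq> X - B"
        using g set_take_subset unfolding comps_def by fastforce
      have fin1: "finite B" by (rule rev_finite_subset[OF X(1)]) (use B in auto)
      have fin2: "finite (\<Union>(set (take k \<gamma>)))" for k by (rule finite_subset[OF sub[of k]]) (use X in auto)
      note fin = fin1 fin2
      have pr: "(\<Prod>i\<in>B \<union> \<Union>(set (take k \<gamma>)). g i) = (\<Prod>i\<in>B. g i) * (\<Prod>i\<in>\<Union>(set (take k \<gamma>)). g i)" for k
        by (rule prod.union_disjoint) (use fin sub in auto)
      have ex: "card X + length (B#\<gamma>) = (card B + 1) + (card (X - B) + length \<gamma>)"
        unfolding cX by simp
      have pw: "(-1::complex) ^ (card X + length (B#\<gamma>)) = (-1) ^ (card B + 1) * (-1) ^ (card (X - B) + length \<gamma>)"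
        unfolding ex by (rule power_add)
      have pe: "(\<Prod>k<length (B#\<gamma>). r (c * prod g (\<Union>(set (take k (B#\<gamma>))))) (card ((B#\<gamma>) ! k))) =
          r c (card B) * (\<Prod>k<length \<gamma>. r (c * prod g (B \<union> \<Union>(set (take k \<gamma>)))) (card (\<gamma> ! k)))"
        by (simp only: length_Cons prod.lessThan_Suc_shift) simp
      have "?F (B#\<gamma>) = (-1) ^ (card B + 1) * r c (card B) * ((-1) ^ (card (X - B) + length \<gamma>) *
          (\<Prod>k<length \<gamma>. r (c * (\<Prod>i\<in>B. g i) * (\<Prod>i\<in>\<Union>(set (take k \<gamma>)). g i)) (card (\<gamma> ! k))))"
        unfolding pw pe pr by (simp only: mult_ac)
      then show "?F (B#\<gamma>) = (-1) ^ (card B + 1) * r c (card B) * ((-1) ^ (card (X - B) + length \<gamma>) *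
          (\<Prod>k<length \<gamma>. r (c * (\<Prod>i\<in>B. g i) * (\<Prod>i\<in>\<Union>(set (take k \<gamma>)). g i)) (card (\<gamma> ! k))))" .
    qed
  qed
  finally show ?thesis .
qed



lemma W_cong:
  assumes h: "\<And>x. x \<in> X \<Longrightarrow> g x = g' x"
  shows "W r g c X = W r g' c X"
  unfolding W_def
proof (rule sum.cong[OF refl])
  fix \<gamma> assume g: "\<gamma> \<in> comps X"
  have sub: "\<Union>(set (take k \<gamma>)) \<subseteq> X" for k using g set_take_subset unfolding comps_def by fastforce
  have "prod g (\<Union> (set (take k \<gamma>))) = prod g' (\<Union> (set (take k \<gamma>)))" for k
    using h sub[of k] by (auto intro!: prod.cong)
  then show "(-1) ^ (card X + length \<gamma>) * (\<Prod>k<length \<gamma>. r (c * prod g (\<Union> (set (take k \<gamma>)))) (card (\<gamma> ! k))) =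
    (-1) ^ (card X + length \<gamma>) * (\<Prod>k<length \<gamma>. r (c * prod g' (\<Union> (set (take k \<gamma>)))) (card (\<gamma> ! k)))"
    by simp
qed

lemma W_reindex:
  assumes "finite X" "inj_on h X"
  shows "W r g c (h ` X) = W r (g \<circ> h) c X"
  using assms
proof (induction "card X" arbitrary: X c rule: less_induct)
  case less
  show ?case
  proof (cases "X = {}")
    case True then show ?thesis by (simp add: W_empty)
  next
    case False
    have fX: "finite (h ` X)" "h ` X \<noteq> {}" using less.prems False by auto
    have eq: "{B'. B' \<subseteq> h ` X \<and> B' \<noteq> {}} = (image h) ` {B. B \<subseteq> X \<and> B \<noteq> {}}"
    proof (rule set_eqI iffI)+
      fix B' assume "B' \<in> {B'. B' \<subseteq> h ` X \<and> B' \<noteq> {}}"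
      then have "B' = h ` (X \<inter> h -` B')" "X \<inter> h -` B' \<subseteq> X" "X \<inter> h -` B' \<noteq> {}" by auto
      then show "B' \<in> (image h) ` {B. B \<subseteq> X \<and> B \<noteq> {}}" by blast
    qed auto
    have inj: "inj_on (image h) {B. B \<subseteq> X \<and> B \<noteq> {}}"
      using inj_on_image_Pow[OF less.prems(2)] by (rule inj_on_subset) auto
    have "W r g c (h ` X) = (\<Sum>B\<in>{B. B \<subseteq> X \<and> B \<noteq> {}}. (-1) ^ (card (h ` B) + 1) * r c (card (h ` B)) *
            W r g (c * (\<Prod>i\<in>h ` B. g i)) (h ` X - h ` B))"
      unfolding W_rec[OF fX] eq by (subst sum.reindex[OF inj]) simp
    also have "\<dots> = (\<Sum>B\<in>{B. B \<subseteq> X \<and> B \<noteq> {}}. (-1) ^ (card B + 1) * r c (card B) *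
            W r (g \<circ> h) (c * (\<Prod>i\<in>B. (g \<circ> h) i)) (X - B))"
    proof (rule sum.cong[OF refl])
      fix B assume B: "B \<in> {B. B \<subseteq> X \<and> B \<noteq> {}}"
      have ib: "inj_on h B" using less.prems(2) by (rule inj_on_subset) (use B in auto)
      have c1: "card (h ` B) = card B" using card_image[OF ib] .
      have p1: "(\<Prod>i\<in>h ` B. g i) = (\<Prod>i\<in>B. (g \<circ> h) i)" using prod.reindex[OF ib] by simp
      have d: "h ` X - h ` B = h ` (X - B)" using inj_on_image_set_diff[OF less.prems(2)] B by auto
      have ib2: "inj_on h (X - B)" using less.prems(2) by (rule inj_on_subset) auto
      have "W r g (c * (\<Prod>i\<in>B. (g \<circ> h) i)) (h ` (X - B)) = W r (g \<circ> h) (c * (\<Prod>i\<in>B. (g \<circ> h) i)) (X - B)"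
        using less.hyps[of "X - B", OF _ _ ib2] card_diff_less[of X B] less.prems B by auto
      then show "(-1) ^ (card (h ` B) + 1) * r c (card (h ` B)) * W r g (c * (\<Prod>i\<in>h ` B. g i)) (h ` X - h ` B) =
          (-1) ^ (card B + 1) * r c (card B) * W r (g \<circ> h) (c * (\<Prod>i\<in>B. (g \<circ> h) i)) (X - B)"
        by (simp add: c1 p1 d)
    qed
    also have "\<dots> = W r (g \<circ> h) c X" using W_rec[OF less.prems(1) False] by simp
    finally show ?thesis .
  qed
qed

lemma alt_sum: "finite S \<Longrightarrow> (\<Sum>D\<in>Pow S. (-1::complex) ^ card D) = (if S = {} then 1 else 0)"
proof (induction S rule: finite_induct)
  case empty then show ?case by simp
next
  case (insert x F)
  have inj: "inj_on (insert x) (Pow F)" using insert.hyps by (auto simp: inj_on_def)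
  have dis: "Pow F \<inter> insert x ` Pow F = {}" using insert.hyps by auto
  have "(\<Sum>D\<in>Pow (insert x F). (-1::complex) ^ card D) =
        (\<Sum>D\<in>Pow F. (-1::complex) ^ card D) + (\<Sum>D\<in>insert x ` Pow F. (-1::complex) ^ card D)"
    unfolding Pow_insert using insert.hyps by (subst sum.union_disjoint) (auto simp: dis)
  also have "(\<Sum>D\<in>insert x ` Pow F. (-1::complex) ^ card D) = (\<Sum>D\<in>Pow F. (-1::complex) ^ card (insert x D))"
    by (rule sum.reindex[OF inj, unfolded comp_def])
  also have "\<dots> = (\<Sum>D\<in>Pow F. - ((-1::complex) ^ card D))"
  proof (rule sum.cong[OF refl])
    fix D assume "D \<in> Pow F"
    then have "finite D" "x \<notin> D" using insert.hyps rev_finite_subset[of F D] by auto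
    then show "(-1::complex) ^ card (insert x D) = - ((-1) ^ card D)" by simp
  qed
  finally show ?case by (simp add: sum_negf)
qed

lemma collapse_sum:
  assumes "finite Z" "V \<subseteq> Z"
  shows "(\<Sum>B\<in>{B. V \<subseteq> B \<and> B \<subseteq> Z}. (-1::complex) ^ card (Z - B)) = (if V = Z then 1 else 0)"
proof -
  have "(\<Sum>B\<in>{B. V \<subseteq> B \<and> B \<subseteq> Z}. (-1::complex) ^ card (Z - B)) = (\<Sum>D\<in>Pow (Z - V). (-1::complex) ^ card D)"
    by (rule sum.reindex_bij_witness[where i="\<lambda>D. Z - D" and j="\<lambda>B. Z - B"]) (use assms in auto)
  also have "\<dots> = (if V = Z then 1 else 0)" using alt_sum[of "Z - V"] assms by auto
  finally show ?thesis .
qed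

lemma diff_sub: "Y \<subseteq> X - B \<Longrightarrow> Y - B = Y" by auto

lemma pair_reindex:
  assumes "finite X" "A \<subseteq> Pow X"
  shows "(\<Sum>B\<in>A. \<Sum>Y\<in>Pow (X - B). f B Y) = (\<Sum>Z\<in>Pow X. \<Sum>B\<in>{B\<in>A. B \<subseteq> Z}. f B (Z - B))"
proof -
  have fA: "finite A" by (rule finite_subset[OF assms(2)]) (use assms(1) in simp)
  have "(\<Sum>B\<in>A. \<Sum>Y\<in>Pow (X - B). f B Y) = (\<Sum>(B,Y)\<in>(SIGMA B:A. Pow (X - B)). f B Y)"
    by (rule sum.Sigma) (use fA assms in auto)
  also have "\<dots> = (\<Sum>(Z,B)\<in>(SIGMA Z:Pow X. {B\<in>A. B \<subseteq> Z}). f B (Z - B))"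
    by (rule sum.reindex_bij_witness[where i="\<lambda>(Z,B). (B, Z - B)" and j="\<lambda>(B,Y). (B \<union> Y, B)"])
       (use assms in \<open>auto simp: Un_Diff diff_sub\<close>)
  also have "\<dots> = (\<Sum>Z\<in>Pow X. \<Sum>B\<in>{B\<in>A. B \<subseteq> Z}. f B (Z - B))"
    by (rule sum.Sigma[symmetric]) (use fA assms in auto)
  finally show ?thesis .
qed

lemma neg1_pow_eq: "even (a + b) \<Longrightarrow> (-1::complex) ^ a = (-1) ^ b"
  by (metis even_add minus_one_power_iff)



definition Hs :: "(complex \<Rightarrow> nat \<Rightarrow> complex) \<Rightarrow> ('a \<Rightarrow> complex) \<Rightarrow> complex \<Rightarrow> 'a set \<Rightarrow> complex" where
  "Hs r g c X = (\<Sum>Y\<in>Pow X. (-1) ^ card Y * W r g (c * prod g Y) (X - Y))"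

lemma stepC:
  assumes X: "finite X" and V: "V \<subseteq> X"
  shows "(\<Sum>B\<in>{B. V \<subseteq> B \<and> B \<subseteq> X}. Hs r g (c * prod g B) (X - B)) = W r g (c * prod g V) (X - V)"
proof -
  let ?A = "{B. V \<subseteq> B \<and> B \<subseteq> X}"
  have "(\<Sum>B\<in>?A. Hs r g (c * prod g B) (X - B)) =
        (\<Sum>B\<in>?A. \<Sum>Y\<in>Pow (X - B). (-1) ^ card Y * W r g (c * prod g B * prod g Y) (X - B - Y))"
    by (simp add: Hs_def)
  also have "\<dots> = (\<Sum>Z\<in>Pow X. \<Sum>B\<in>{B\<in>?A. B \<subseteq> Z}. (-1) ^ card (Z - B) * W r g (c * prod g B * prod g (Z - B)) (X - B - (Z - B)))"
    by (rule pair_reindex[OF X]) auto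
  also have "\<dots> = (\<Sum>Z\<in>Pow X. (\<Sum>B\<in>{B. V \<subseteq> B \<and> B \<subseteq> Z}. (-1) ^ card (Z - B)) * W r g (c * prod g Z) (X - Z))"
    unfolding sum_distrib_right
  proof (rule sum.cong[OF refl], rule sum.cong)
    fix Z assume Z: "Z \<in> Pow X"
    show "{B\<in>?A. B \<subseteq> Z} = {B. V \<subseteq> B \<and> B \<subseteq> Z}" using Z by auto
    fix B assume B: "B \<in> {B. V \<subseteq> B \<and> B \<subseteq> Z}"
    have fZ: "finite Z" by (rule rev_finite_subset[OF X]) (use Z in auto)
    have "prod g Z = prod g (Z - B) * prod g B" using B fZ by (intro prod.subset_diff) auto
    moreover have "X - B - (Z - B) = X - Z" using B Z by auto
    ultimately show "(-1) ^ card (Z - B) * W r g (c * prod g B * prod g (Z - B)) (X - B - (Z - B)) =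
        (-1) ^ card (Z - B) * W r g (c * prod g Z) (X - Z)" by (simp add: mult_ac)
  qed
  also have "\<dots> = (\<Sum>Z\<in>Pow X. (if Z = V then W r g (c * prod g Z) (X - Z) else 0))"
  proof (rule sum.cong[OF refl])
    fix Z assume Z: "Z \<in> Pow X"
    have fZ: "finite Z" by (rule rev_finite_subset[OF X]) (use Z in auto)
    show "(\<Sum>B\<in>{B. V \<subseteq> B \<and> B \<subseteq> Z}. (-1::complex) ^ card (Z - B)) * W r g (c * prod g Z) (X - Z) =
          (if Z = V then W r g (c * prod g Z) (X - Z) else 0)"
    proof (cases "V \<subseteq> Z")
      case True then show ?thesis using collapse_sum[OF fZ True] by auto
    next
      case False
      then have e: "{B. V \<subseteq> B \<and> B \<subseteq> Z} = {}" and "Z \<noteq> V" by auto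
      then show ?thesis by (simp only: e sum.empty) simp
    qed
  qed
  also have "\<dots> = W r g (c * prod g V) (X - V)"
    using V X by (subst sum.delta) auto
  finally show ?thesis .
qed

context
  fixes r :: "complex \<Rightarrow> nat \<Rightarrow> complex" and q :: complex
  assumes hr0: "\<And>x. x \<noteq> 0 \<Longrightarrow> r x 0 = 1"
    and hrq: "\<And>x m. x \<noteq> 0 \<Longrightarrow>
               r (q * x) m = (\<Sum>i=0..m. (-1) ^ i * of_nat (m choose i) * r x (m - i))"
begin

lemma hrq_set:
  assumes c: "c \<noteq> 0" and B: "finite B"
  shows "r (q * c) (card B) = (\<Sum>V\<in>Pow B. (-1) ^ card (B - V) * r c (card V))"
proof -
  let ?m = "card B"
  have "(\<Sum>V\<in>Pow B. (-1) ^ card (B - V) * r c (card V)) = (\<Sum>V\<in>Pow B. (-1) ^ (?m - card V) * r c (card V))"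
  proof (rule sum.cong[OF refl])
    fix V assume "V \<in> Pow B"
    moreover then have "finite V" using rev_finite_subset[OF B] by auto
    ultimately show "(-1) ^ card (B - V) * r c (card V) = (-1) ^ (?m - card V) * r c (card V)"
      by (simp add: card_Diff_subset)
  qed
  also have "\<dots> = (\<Sum>j\<in>{0..?m}. \<Sum>V\<in>{V. V \<in> Pow B \<and> card V = j}. (-1) ^ (?m - card V) * r c (card V))"
    by (rule sum.group[symmetric]) (use B in \<open>auto intro: card_mono\<close>)
  also have "\<dots> = (\<Sum>j\<in>{0..?m}. of_nat (?m choose j) * ((-1) ^ (?m - j) * r c j))"
  proof (rule sum.cong[OF refl])
    fix j
    have "(\<Sum>V\<in>{V. V \<in> Pow B \<and> card V = j}. (-1) ^ (?m - card V) * r c (card V)) =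
          (\<Sum>V\<in>{V. V \<subseteq> B \<and> card V = j}. (-1) ^ (?m - j) * r c j)"
      by (rule sum.cong) auto
    also have "\<dots> = of_nat (?m choose j) * ((-1) ^ (?m - j) * r c j)"
      using n_subsets[OF B, of j] by simp
    finally show "(\<Sum>V\<in>{V. V \<in> Pow B \<and> card V = j}. (-1) ^ (?m - card V) * r c (card V)) =
          of_nat (?m choose j) * ((-1) ^ (?m - j) * r c j)" .
  qed
  also have "\<dots> = (\<Sum>i=0..?m. (-1) ^ i * of_nat (?m choose i) * r c (?m - i))"
    by (subst sum.atLeastAtMost_rev) (auto intro!: sum.cong simp: binomial_symmetric[symmetric])
  finally show ?thesis using hrq[OF c] by simp
qed

lemma L1:
  assumes "finite X" "c \<noteq> 0" "\<forall>x\<in>X. g x \<noteq> 0"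
  shows "W r g (q * c) X = Hs r g c X"
  using assms
proof (induction "card X" arbitrary: X c rule: less_induct)
  case less
  note X = less.prems(1) and c = less.prems(2) and gX = less.prems(3)
  show ?case
  proof (cases "X = {}")
    case True then show ?thesis by (simp add: W_empty Hs_def)
  next
    case False
    let ?S = "{B. B \<subseteq> X \<and> B \<noteq> {}}"
    have finB: "finite B" if "B \<subseteq> X" for B by (rule rev_finite_subset[OF X that])
    have nz: "c * prod g B \<noteq> 0" if "B \<subseteq> X" for B
      using c gX that finB[OF that] by (auto simp: prod_zero_iff)
    have "W r g (q * c) X = (\<Sum>B\<in>?S. (-1) ^ (card B + 1) * r (q * c) (card B) * W r g (q * (c * prod g B)) (X - B))"
      using W_rec[OF X False] by (simp add: mult_ac)
    also have "\<dots> = (\<Sum>B\<in>?S. (-1) ^ (card B + 1) * r (q * c) (card B) * Hs r g (c * prod g B) (X - B))"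
    proof (rule sum.cong[OF refl])
      fix B assume B: "B \<in> ?S"
      have "W r g (q * (c * prod g B)) (X - B) = Hs r g (c * prod g B) (X - B)"
        using less.hyps[OF card_diff_less[OF X] _ nz] B X gX by auto
      then show "(-1) ^ (card B + 1) * r (q * c) (card B) * W r g (q * (c * prod g B)) (X - B) =
          (-1) ^ (card B + 1) * r (q * c) (card B) * Hs r g (c * prod g B) (X - B)" by simp
    qed
    also have "\<dots> = (\<Sum>B\<in>?S. \<Sum>V\<in>{V. V \<in> Pow X \<and> V \<subseteq> B}. (-1) ^ (card V + 1) * r c (card V) * Hs r g (c * prod g B) (X - B))"
    proof (rule sum.cong[OF refl])
      fix B assume B: "B \<in> ?S"
      have fB: "finite B" using B finB by auto
      have "{V. V \<in> Pow X \<and> V \<subseteq> B} = Pow B" using B by auto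
      moreover have "(-1) ^ (card B + 1) * ((-1) ^ card (B - V) * r c (card V)) * Hs r g (c * prod g B) (X - B) =
          (-1) ^ (card V + 1) * r c (card V) * Hs r g (c * prod g B) (X - B)" if "V \<in> Pow B" for V
      proof -
        have "card B = card V + card (B - V)" using card_split[OF fB] that by auto
        then have "even (card B + 1 + card (B - V) + (card V + 1))" by presburger
        then have "(-1::complex) ^ (card B + 1) * (-1) ^ card (B - V) = (-1) ^ (card V + 1)"
          unfolding power_add[symmetric] by (rule neg1_pow_eq)
        then show ?thesis by (metis (no_types, lifting) mult.assoc)
      qed
      ultimately show "(-1) ^ (card B + 1) * r (q * c) (card B) * Hs r g (c * prod g B) (X - B) =
          (\<Sum>V\<in>{V. V \<in> Pow X \<and> V \<subseteq> B}. (-1) ^ (card V + 1) * r c (card V) * Hs r g (c * prod g B) (X - B))"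
        unfolding hrq_set[OF c fB] sum_distrib_left sum_distrib_right by (intro sum.cong) auto
    qed
    also have "\<dots> = (\<Sum>V\<in>Pow X. \<Sum>B\<in>{B. B \<in> ?S \<and> V \<subseteq> B}. (-1) ^ (card V + 1) * r c (card V) * Hs r g (c * prod g B) (X - B))"
      by (rule sum.swap_restrict) (use X in auto)
    also have "\<dots> = (\<Sum>V\<in>Pow X. (-1) ^ (card V + 1) * r c (card V) * (\<Sum>B\<in>{B. B \<in> ?S \<and> V \<subseteq> B}. Hs r g (c * prod g B) (X - B)))"
      by (simp add: sum_distrib_left)
    also have "\<dots> = (\<Sum>V\<in>Pow X. (-1) ^ (card V + 1) * r c (card V) * (if V = {} then W r g c X - Hs r g c X else W r g (c * prod g V) (X - V)))"
    proof (rule sum.cong[OF refl])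
      fix V assume V: "V \<in> Pow X"
      have fin: "finite {B. V \<subseteq> B \<and> B \<subseteq> X}" by (rule finite_subset[of _ "Pow X"]) (use X in auto)
      have "(\<Sum>B\<in>{B. B \<in> ?S \<and> V \<subseteq> B}. Hs r g (c * prod g B) (X - B)) =
            (if V = {} then W r g c X - Hs r g c X else W r g (c * prod g V) (X - V))"
      proof (cases "V = {}")
        case True
        have "{B. B \<in> ?S \<and> V \<subseteq> B} = {B. V \<subseteq> B \<and> B \<subseteq> X} - {{}}" using True by auto
        then have "(\<Sum>B\<in>{B. B \<in> ?S \<and> V \<subseteq> B}. Hs r g (c * prod g B) (X - B)) =
            (\<Sum>B\<in>{B. V \<subseteq> B \<and> B \<subseteq> X}. Hs r g (c * prod g B) (X - B)) - Hs r g (c * prod g {}) (X - {})"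
          using fin True by (simp add: sum_diff1)
        then show ?thesis using stepC[OF X, of V r g c] True by simp
      next
        case False
        have "{B. B \<in> ?S \<and> V \<subseteq> B} = {B. V \<subseteq> B \<and> B \<subseteq> X}" using False by auto
        then show ?thesis using stepC[OF X, of V r g c] V False by simp
      qed
      then show "(-1) ^ (card V + 1) * r c (card V) * (\<Sum>B\<in>{B. B \<in> ?S \<and> V \<subseteq> B}. Hs r g (c * prod g B) (X - B)) =
          (-1) ^ (card V + 1) * r c (card V) * (if V = {} then W r g c X - Hs r g c X else W r g (c * prod g V) (X - V))"
        by simp
    qed
    also have "\<dots> = - (W r g c X - Hs r g c X) + (\<Sum>V\<in>?S. (-1) ^ (card V + 1) * r c (card V) * W r g (c * prod g V) (X - V))"
    proof -
      have "Pow X = insert {} ?S" by auto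
      moreover have "{} \<notin> ?S" by auto
      moreover have "finite ?S" by (rule finite_subset[of _ "Pow X"]) (use X in auto)
      ultimately show ?thesis using hr0[OF c] by (simp add: sum.insert)
    qed
    also have "\<dots> = Hs r g c X" using W_rec[OF X False, of r g c] by simp
    finally show ?thesis .
  qed
qed

end



definition K :: "(complex \<Rightarrow> nat \<Rightarrow> complex) \<Rightarrow> ('a \<Rightarrow> complex) \<Rightarrow> 'a set \<Rightarrow> complex \<Rightarrow> 'a set \<Rightarrow> complex" where
  "K r g B c X = W r (\<lambda>b. prod g b) c (insert B ((\<lambda>x. {x}) ` (X - B)))"

lemma sign_split:
  assumes "finite Z" "S \<subseteq> Z"
  shows "(-1::complex) ^ (card S + 1) * (-1) ^ card (Z - S) = (-1) ^ (card Z + 1)"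
proof -
  have "card Z = card S + card (Z - S)" using card_split[OF assms] .
  then have "even (card S + 1 + card (Z - S) + (card Z + 1))" by presburger
  then show ?thesis unfolding power_add[symmetric] by (rule neg1_pow_eq)
qed

lemma K_rec:
  assumes X: "finite X" and aB: "a \<in> B" and BX: "B \<subseteq> X"
  shows "K r g B c X =
     (\<Sum>C\<in>{C. C \<subseteq> X - B \<and> C \<noteq> {}}. (-1) ^ (card C + 1) * r c (card C) * K r g B (c * prod g C) (X - C))
   + (\<Sum>C\<in>Pow (X - B). (-1) ^ card C * r c (card C + 1) * W r g (c * prod g (B \<union> C)) (X - B - C))"
proof -
  let ?s = "\<lambda>Y. (\<lambda>x. {x}) ` Y"
  let ?G = "\<lambda>b. prod g b"
  let ?Y = "X - B"
  let ?M = "insert B (?s ?Y)"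
  let ?F = "\<lambda>D. (-1) ^ (card D + 1) * r c (card D) * W r ?G (c * prod ?G D) (?M - D)"
  have fY: "finite ?Y" using X by simp
  have Bns: "B \<notin> ?s C" if "C \<subseteq> ?Y" for C using that aB by auto
  have fM: "finite ?M" "?M \<noteq> {}" using fY by auto
  have split: "{D. D \<subseteq> ?M \<and> D \<noteq> {}} = (image (\<lambda>x. {x})) ` {C. C \<subseteq> ?Y \<and> C \<noteq> {}} \<union> (\<lambda>C. insert B (?s C)) ` Pow ?Y" (is "?L = ?R")
  proof (rule equalityI)
    show "?R \<subseteq> ?L" by auto
  next
    show "?L \<subseteq> ?R"
    proof (rule subsetI)
    fix D assume D: "D \<in> {D. D \<subseteq> ?M \<and> D \<noteq> {}}"
    let ?C = "{x \<in> ?Y. {x} \<in> D}"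
    have DB: "D - {B} = ?s ?C" using D by auto
    show "D \<in> (image (\<lambda>x. {x})) ` {C. C \<subseteq> ?Y \<and> C \<noteq> {}} \<union> (\<lambda>C. insert B (?s C)) ` Pow ?Y"
    proof (cases "B \<in> D")
      case True
      then have "D = insert B (?s ?C)" using DB by auto
      then show ?thesis by blast
    next
      case False
      then have "D = ?s ?C" "?C \<noteq> {}" using DB D by auto
      then show ?thesis by blast
    qed
    qed
  qed
  have disj: "(image (\<lambda>x. {x})) ` {C. C \<subseteq> ?Y \<and> C \<noteq> {}} \<inter> (\<lambda>C. insert B (?s C)) ` Pow ?Y = {}"
  proof (rule equals0I)
    fix D assume DD: "D \<in> (image (\<lambda>x. {x})) ` {C. C \<subseteq> ?Y \<and> C \<noteq> {}} \<inter> (\<lambda>C. insert B (?s C)) ` Pow ?Y"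
    from DD have D1: "D \<in> (image (\<lambda>x. {x})) ` {C. C \<subseteq> ?Y \<and> C \<noteq> {}}" by (rule IntD1)
    from DD have D2: "D \<in> (\<lambda>C. insert B (?s C)) ` Pow ?Y" by (rule IntD2)
    from D2 obtain C' where "D = insert B (?s C')" "C' \<in> Pow ?Y" by (rule imageE)
    then have "B \<in> D" by simp
    from D1 obtain C where C: "D = ?s C" "C \<in> {C. C \<subseteq> ?Y \<and> C \<noteq> {}}" by (rule imageE)
    have "C \<subseteq> ?Y" using C(2) by simp
    then have "B \<notin> D" unfolding C(1) by (rule Bns)
    then show False using \<open>B \<in> D\<close> by simp
  qed
  have inj1: "inj_on (image (\<lambda>x. {x})) {C. C \<subseteq> ?Y \<and> C \<noteq> {}}"
    by (rule inj_on_subset[OF inj_on_image_Pow[of _ ?Y]]) (auto simp: inj_on_def)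
  have inj2: "inj_on (\<lambda>C. insert B (?s C)) (Pow ?Y)"
  proof (rule inj_onI)
    fix C1 C2 assume C: "C1 \<in> Pow ?Y" "C2 \<in> Pow ?Y" "insert B (?s C1) = insert B (?s C2)"
    then have "?s C1 = ?s C2" using Bns[of C1] Bns[of C2]
      by (metis Diff_insert_absorb PowD)
    then show "C1 = C2" by blast
  qed
  have fin1: "finite {C. C \<subseteq> ?Y \<and> C \<noteq> {}}" by (rule finite_subset[of _ "Pow ?Y"]) (use fY in auto)
  have "K r g B c X = (\<Sum>D\<in>{D. D \<subseteq> ?M \<and> D \<noteq> {}}. ?F D)"
    unfolding K_def by (rule W_rec[OF fM])
  also have "\<dots> = (\<Sum>D\<in>(image (\<lambda>x. {x})) ` {C. C \<subseteq> ?Y \<and> C \<noteq> {}}. ?F D) + (\<Sum>D\<in>(\<lambda>C. insert B (?s C)) ` Pow ?Y. ?F D)"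
    unfolding split by (rule sum.union_disjoint) (use fin1 fY disj in auto)
  also have "(\<Sum>D\<in>(image (\<lambda>x. {x})) ` {C. C \<subseteq> ?Y \<and> C \<noteq> {}}. ?F D) =
      (\<Sum>C\<in>{C. C \<subseteq> X - B \<and> C \<noteq> {}}. (-1) ^ (card C + 1) * r c (card C) * K r g B (c * prod g C) (X - C))"
  proof (subst sum.reindex[OF inj1], rule sum.cong[OF refl])
    fix C assume C: "C \<in> {C. C \<subseteq> ?Y \<and> C \<noteq> {}}"
    have fC: "finite C" by (rule rev_finite_subset[OF fY]) (use C in auto)
    have isg: "inj_on (\<lambda>x. {x}) C" by (auto simp: inj_on_def)
    have c1: "card (?s C) = card C" by (rule card_image[OF isg])
    have p1: "prod ?G (?s C) = prod g C" using prod.reindex[OF isg, of ?G] by simp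
    have m1: "?M - ?s C = insert B (?s (X - C - B))" using Bns[of ?Y] C by auto
    show "(?F \<circ> image (\<lambda>x. {x})) C = (-1) ^ (card C + 1) * r c (card C) * K r g B (c * prod g C) (X - C)"
      unfolding K_def comp_def c1 p1 m1 ..
  qed
  also have "(\<Sum>D\<in>(\<lambda>C. insert B (?s C)) ` Pow ?Y. ?F D) =
      (\<Sum>C\<in>Pow (X - B). (-1) ^ card C * r c (card C + 1) * W r g (c * prod g (B \<union> C)) (X - B - C))"
  proof (subst sum.reindex[OF inj2], rule sum.cong[OF refl])
    fix C assume C: "C \<in> Pow ?Y"
    have fC: "finite C" by (rule rev_finite_subset[OF fY]) (use C in auto)
    have isg: "inj_on (\<lambda>x. {x}) C" by (auto simp: inj_on_def)
    have isY: "inj_on (\<lambda>x. {x}) (X - B - C)" by (auto simp: inj_on_def)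
    have c1: "card (insert B (?s C)) = card C + 1"
      using card_image[OF isg] Bns[of C] C fC by simp
    have p1: "prod ?G (insert B (?s C)) = prod g (B \<union> C)"
    proof -
      have fB: "finite B" by (rule rev_finite_subset[OF X BX])
      have "prod ?G (insert B (?s C)) = prod g B * prod ?G (?s C)"
        using Bns[of C] C fC by simp
      also have "prod ?G (?s C) = prod g C" using prod.reindex[OF isg, of ?G] by simp
      also have "prod g B * prod g C = prod g (B \<union> C)"
      proof -
        have "B \<inter> C = {}" using C by auto
        then show ?thesis using prod.union_disjoint[OF fB fC, of g] by simp
      qed
      finally show ?thesis .
    qed
    have m1: "?M - insert B (?s C) = ?s (X - B - C)" using C by auto
    have w1: "W r ?G c' (?s (X - B - C)) = W r g c' (X - B - C)" for c'
      using W_reindex[OF _ isY, of r ?G c'] X by (simp add: comp_def)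
    have sg: "(-1::complex) ^ (card C + 1 + 1) = (-1) ^ card C" by simp
    show "(?F \<circ> (\<lambda>C. insert B (?s C))) C = (-1) ^ card C * r c (card C + 1) * W r g (c * prod g (B \<union> C)) (X - B - C)"
      unfolding comp_def c1 p1 m1 w1 sg ..
  qed
  finally show ?thesis .
qed

lemma coef_eq:
  assumes Z: "finite Z"
  shows "(\<Sum>S\<in>{S. a \<in> S \<and> S \<subseteq> Z}. (-1::complex) ^ (card S + 1) * r c (card S) * (-1) ^ card (Z - S)) =
         (\<Sum>B\<in>{B. a \<in> B \<and> B \<subseteq> Z}. (-1::complex) ^ (card B + 1) * (-1) ^ card (Z - B) * r c (card (Z - B) + 1))"
proof -
  have "(\<Sum>S\<in>{S. a \<in> S \<and> S \<subseteq> Z}. (-1::complex) ^ (card S + 1) * r c (card S) * (-1) ^ card (Z - S)) =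
        (\<Sum>S\<in>{S. a \<in> S \<and> S \<subseteq> Z}. (-1::complex) ^ (card Z + 1) * r c (card S))"
    by (rule sum.cong[OF refl]) (use sign_split[OF Z] in \<open>auto simp: mult_ac\<close>)
  also have "\<dots> = (\<Sum>B\<in>{B. a \<in> B \<and> B \<subseteq> Z}. (-1::complex) ^ (card Z + 1) * r c (card (Z - B) + 1))"
  proof -
    let ?A = "{S. a \<in> S \<and> S \<subseteq> Z}"
    have e1: "insert a (Z - insert a (Z - S)) = S" if "S \<in> ?A" for S using that by auto
    have e2: "insert a (Z - S) \<in> ?A" if "S \<in> ?A" for S using that by auto
    have e3: "r c (card (Z - insert a (Z - S)) + 1) = r c (card S)" if S: "S \<in> ?A" for S
    proof -
      have fS: "finite S" by (rule rev_finite_subset[OF Z]) (use S in auto)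
      have "Z - insert a (Z - S) = S - {a}" using S by auto
      moreover have "card S > 0" using fS S by (auto simp: card_gt_0_iff)
      ultimately have "card (Z - insert a (Z - S)) + 1 = card S" using fS S by (simp add: card_Diff_singleton)
      then show ?thesis by simp
    qed
    show ?thesis
      by (rule sum.reindex_bij_witness[where i="\<lambda>S. insert a (Z - S)" and j="\<lambda>S. insert a (Z - S)"])
         (use e1 e2 e3 in simp_all)
  qed
  also have "\<dots> = (\<Sum>B\<in>{B. a \<in> B \<and> B \<subseteq> Z}. (-1::complex) ^ (card B + 1) * (-1) ^ card (Z - B) * r c (card (Z - B) + 1))"
    by (rule sum.cong[OF refl]) (use sign_split[OF Z] in \<open>auto simp: mult_ac\<close>)
  finally show ?thesis .
qed



context
  fixes r :: "complex \<Rightarrow> nat \<Rightarrow> complex" and q :: complex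
  assumes hr0: "\<And>x. x \<noteq> 0 \<Longrightarrow> r x 0 = 1"
    and hrq: "\<And>x m. x \<noteq> 0 \<Longrightarrow>
               r (q * x) m = (\<Sum>i=0..m. (-1) ^ i * of_nat (m choose i) * r x (m - i))"
begin

lemma L2:
  assumes "finite X" "a \<in> X" "c \<noteq> 0" "\<forall>x\<in>X. g x \<noteq> 0"
  shows "W r (g(a := q * g a)) c X = (\<Sum>B\<in>{B. a \<in> B \<and> B \<subseteq> X}. (-1) ^ (card B + 1) * K r g B c X)"
  using assms
proof (induction "card X" arbitrary: X c rule: less_induct)
  case less
  note X = less.prems(1) and aX = less.prems(2) and c = less.prems(3) and gX = less.prems(4)
  let ?g' = "g(a := q * g a)"
  let ?S = "{S. S \<subseteq> X \<and> S \<noteq> {}}"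
  let ?S1 = "{S. S \<subseteq> X - {a} \<and> S \<noteq> {}}"
  let ?A = "{B. a \<in> B \<and> B \<subseteq> X}"
  have XnE: "X \<noteq> {}" using aX by auto
  have finB: "finite B" if "B \<subseteq> X" for B by (rule rev_finite_subset[OF X that])
  have nz: "c * prod g B \<noteq> 0" if "B \<subseteq> X" for B
    using c gX that finB[OF that] by (auto simp: prod_zero_iff)
  have Ssplit: "?S = ?S1 \<union> ?A" "?S1 \<inter> ?A = {}" using aX by auto
  have fS1: "finite ?S1" by (rule finite_subset[of _ "Pow X"]) (use X in auto)
  have fA: "finite ?A" by (rule finite_subset[of _ "Pow X"]) (use X in auto)
  let ?F = "\<lambda>S. (-1) ^ (card S + 1) * r c (card S) * W r ?g' (c * prod ?g' S) (X - S)"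
  have "W r ?g' c X = (\<Sum>S\<in>?S. ?F S)" by (rule W_rec[OF X XnE])
  also have "\<dots> = (\<Sum>S\<in>?S1. ?F S) + (\<Sum>S\<in>?A. ?F S)"
    unfolding Ssplit(1) by (rule sum.union_disjoint[OF fS1 fA Ssplit(2)])
  also have "(\<Sum>S\<in>?S1. ?F S) = (\<Sum>S\<in>?S1. \<Sum>B\<in>{B. a \<in> B \<and> B \<subseteq> X - S}.
      (-1) ^ (card S + 1) * r c (card S) * ((-1) ^ (card B + 1) * K r g B (c * prod g S) (X - S)))"
  proof (rule sum.cong[OF refl])
    fix S assume S: "S \<in> ?S1"
    have p: "prod ?g' S = prod g S" using S by (intro prod.cong) auto
    have wS: "W r ?g' (c * prod g S) (X - S) = (\<Sum>B\<in>{B. a \<in> B \<and> B \<subseteq> X - S}. (-1) ^ (card B + 1) * K r g B (c * prod g S) (X - S))"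
    proof (rule less.hyps[OF card_diff_less[OF X]])
      show "S \<subseteq> X" "S \<noteq> {}" using S by auto
      show "finite (X - S)" using X by simp
      show "a \<in> X - S" using S aX by auto
      show "c * prod g S \<noteq> 0" using nz S by auto
      show "\<forall>x\<in>X - S. g x \<noteq> 0" using gX by auto
    qed
    show "?F S = (\<Sum>B\<in>{B. a \<in> B \<and> B \<subseteq> X - S}.
      (-1) ^ (card S + 1) * r c (card S) * ((-1) ^ (card B + 1) * K r g B (c * prod g S) (X - S)))"
      unfolding p wS sum_distrib_left by (rule refl)
  qed
  also have "(\<Sum>S\<in>?A. ?F S) = (\<Sum>S\<in>?A. \<Sum>Y\<in>Pow (X - S).
      (-1) ^ (card S + 1) * r c (card S) * ((-1) ^ card Y * W r g (c * prod g S * prod g Y) (X - S - Y)))"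
  proof (rule sum.cong[OF refl])
    fix S assume S: "S \<in> ?A"
    have fS: "finite S" using S finB by auto
    have "prod ?g' S = ?g' a * prod ?g' (S - {a})" using S fS by (intro prod.remove) auto
    also have "prod ?g' (S - {a}) = prod g (S - {a})" by (intro prod.cong) auto
    also have "?g' a * prod g (S - {a}) = q * prod g S"
      using prod.remove[OF fS, of a g] S by simp
    finally have p: "prod ?g' S = q * prod g S" .
    have cq: "c * (q * prod g S) = q * (c * prod g S)" by (simp add: ac_simps)
    have w1: "W r ?g' (q * (c * prod g S)) (X - S) = W r g (q * (c * prod g S)) (X - S)"
      by (rule W_cong) (use S in auto)
    have w2: "W r g (q * (c * prod g S)) (X - S) = Hs r g (c * prod g S) (X - S)"
    proof (rule L1[where r=r and q=q, OF hr0 hrq])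
      show "finite (X - S)" using X by simp
      show "c * prod g S \<noteq> 0" using nz S by auto
      show "\<forall>x\<in>X - S. g x \<noteq> 0" using gX by auto
    qed
    have wS: "W r ?g' (c * prod ?g' S) (X - S) = Hs r g (c * prod g S) (X - S)"
      unfolding p cq w1 w2 by (rule refl)
    show "?F S = (\<Sum>Y\<in>Pow (X - S).
      (-1) ^ (card S + 1) * r c (card S) * ((-1) ^ card Y * W r g (c * prod g S * prod g Y) (X - S - Y)))"
      unfolding wS Hs_def sum_distrib_left by (rule refl)
  qed
  also have "(\<Sum>S\<in>?A. \<Sum>Y\<in>Pow (X - S).
      (-1) ^ (card S + 1) * r c (card S) * ((-1) ^ card Y * W r g (c * prod g S * prod g Y) (X - S - Y))) =
      (\<Sum>Z\<in>Pow X. \<Sum>S\<in>{S\<in>?A. S \<subseteq> Z}.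
      (-1) ^ (card S + 1) * r c (card S) * ((-1) ^ card (Z - S) * W r g (c * prod g S * prod g (Z - S)) (X - S - (Z - S))))"
    by (rule pair_reindex[OF X]) auto
  also have "\<dots> = (\<Sum>Z\<in>Pow X. (\<Sum>S\<in>{S. a \<in> S \<and> S \<subseteq> Z}. (-1::complex) ^ (card S + 1) * r c (card S) * (-1) ^ card (Z - S))
        * W r g (c * prod g Z) (X - Z))"
    unfolding sum_distrib_right
  proof (rule sum.cong[OF refl], rule sum.cong)
    fix Z assume Z: "Z \<in> Pow X"
    show "{S\<in>?A. S \<subseteq> Z} = {S. a \<in> S \<and> S \<subseteq> Z}" using Z by auto
    fix S assume S: "S \<in> {S. a \<in> S \<and> S \<subseteq> Z}"
    have fZ: "finite Z" by (rule rev_finite_subset[OF X]) (use Z in auto)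
    have "prod g Z = prod g (Z - S) * prod g S" using S fZ by (intro prod.subset_diff) auto
    moreover have "X - S - (Z - S) = X - Z" using S Z by auto
    ultimately show "(-1) ^ (card S + 1) * r c (card S) * ((-1) ^ card (Z - S) * W r g (c * prod g S * prod g (Z - S)) (X - S - (Z - S))) =
       (-1) ^ (card S + 1) * r c (card S) * (-1) ^ card (Z - S) * W r g (c * prod g Z) (X - Z)"
      by (simp add: mult_ac)
  qed
  also have "\<dots> = (\<Sum>Z\<in>Pow X. (\<Sum>B\<in>{B. a \<in> B \<and> B \<subseteq> Z}. (-1::complex) ^ (card B + 1) * (-1) ^ card (Z - B) * r c (card (Z - B) + 1))
        * W r g (c * prod g Z) (X - Z))"
  proof (rule sum.cong[OF refl])
    fix Z assume Z: "Z \<in> Pow X"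
    have fZ: "finite Z" by (rule rev_finite_subset[OF X]) (use Z in auto)
    show "(\<Sum>S\<in>{S. a \<in> S \<and> S \<subseteq> Z}. (-1::complex) ^ (card S + 1) * r c (card S) * (-1) ^ card (Z - S)) * W r g (c * prod g Z) (X - Z) =
          (\<Sum>B\<in>{B. a \<in> B \<and> B \<subseteq> Z}. (-1::complex) ^ (card B + 1) * (-1) ^ card (Z - B) * r c (card (Z - B) + 1)) * W r g (c * prod g Z) (X - Z)"
      using coef_eq[OF fZ, where a=a and r=r and c=c] by simp
  qed
  also have "\<dots> = (\<Sum>Z\<in>Pow X. \<Sum>B\<in>{B\<in>?A. B \<subseteq> Z}.
      (-1) ^ (card B + 1) * ((-1) ^ card (Z - B) * r c (card (Z - B) + 1) * W r g (c * prod g (B \<union> (Z - B))) (X - B - (Z - B))))"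
    unfolding sum_distrib_right
  proof (rule sum.cong[OF refl], rule sum.cong)
    fix Z assume Z: "Z \<in> Pow X"
    show "{B. a \<in> B \<and> B \<subseteq> Z} = {B\<in>?A. B \<subseteq> Z}" using Z by auto
    fix B assume B: "B \<in> {B\<in>?A. B \<subseteq> Z}"
    have "B \<union> (Z - B) = Z" "X - B - (Z - B) = X - Z" using B Z by auto
    then show "(-1) ^ (card B + 1) * (-1) ^ card (Z - B) * r c (card (Z - B) + 1) * W r g (c * prod g Z) (X - Z) =
      (-1) ^ (card B + 1) * ((-1) ^ card (Z - B) * r c (card (Z - B) + 1) * W r g (c * prod g (B \<union> (Z - B))) (X - B - (Z - B)))"
      by (simp add: mult_ac)
  qed
  also have "\<dots> = (\<Sum>B\<in>?A. \<Sum>C\<in>Pow (X - B).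
      (-1) ^ (card B + 1) * ((-1) ^ card C * r c (card C + 1) * W r g (c * prod g (B \<union> C)) (X - B - C)))"
    by (rule pair_reindex[OF X, symmetric]) auto
  also have "(\<Sum>S\<in>?S1. \<Sum>B\<in>{B. a \<in> B \<and> B \<subseteq> X - S}.
      (-1) ^ (card S + 1) * r c (card S) * ((-1) ^ (card B + 1) * K r g B (c * prod g S) (X - S))) =
      (\<Sum>B\<in>?A. \<Sum>C\<in>{C. C \<subseteq> X - B \<and> C \<noteq> {}}.
      (-1) ^ (card B + 1) * ((-1) ^ (card C + 1) * r c (card C) * K r g B (c * prod g C) (X - C)))"
  proof -
    let ?t = "\<lambda>S B. (-1) ^ (card S + 1) * r c (card S) * ((-1) ^ (card B + 1) * K r g B (c * prod g S) (X - S))"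
    have "(\<Sum>S\<in>?S1. \<Sum>B\<in>{B. a \<in> B \<and> B \<subseteq> X - S}. ?t S B) = (\<Sum>S\<in>?S1. \<Sum>B\<in>{B. B \<in> ?A \<and> B \<inter> S = {}}. ?t S B)"
      by (intro sum.cong refl) auto
    also have "\<dots> = (\<Sum>B\<in>?A. \<Sum>S\<in>{S. S \<in> ?S1 \<and> B \<inter> S = {}}. ?t S B)"
      by (rule sum.swap_restrict[OF fS1 fA])
    also have "\<dots> = (\<Sum>B\<in>?A. \<Sum>C\<in>{C. C \<subseteq> X - B \<and> C \<noteq> {}}. ?t C B)"
      by (intro sum.cong refl) auto
    also have "\<dots> = (\<Sum>B\<in>?A. \<Sum>C\<in>{C. C \<subseteq> X - B \<and> C \<noteq> {}}.
      (-1) ^ (card B + 1) * ((-1) ^ (card C + 1) * r c (card C) * K r g B (c * prod g C) (X - C)))"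
      by (intro sum.cong refl) (simp add: mult_ac)
    finally show ?thesis .
  qed
  also have "(\<Sum>B\<in>?A. \<Sum>C\<in>{C. C \<subseteq> X - B \<and> C \<noteq> {}}.
      (-1) ^ (card B + 1) * ((-1) ^ (card C + 1) * r c (card C) * K r g B (c * prod g C) (X - C))) +
      (\<Sum>B\<in>?A. \<Sum>C\<in>Pow (X - B).
      (-1) ^ (card B + 1) * ((-1) ^ card C * r c (card C + 1) * W r g (c * prod g (B \<union> C)) (X - B - C))) =
      (\<Sum>B\<in>?A. (-1) ^ (card B + 1) * K r g B c X)"
    unfolding sum.distrib[symmetric]
  proof (rule sum.cong[OF refl])
    fix B assume B: "B \<in> ?A"
    have aB: "a \<in> B" "B \<subseteq> X" using B by auto
    show "(\<Sum>C\<in>{C. C \<subseteq> X - B \<and> C \<noteq> {}}.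
      (-1) ^ (card B + 1) * ((-1) ^ (card C + 1) * r c (card C) * K r g B (c * prod g C) (X - C))) +
      (\<Sum>C\<in>Pow (X - B).
      (-1) ^ (card B + 1) * ((-1) ^ card C * r c (card C + 1) * W r g (c * prod g (B \<union> C)) (X - B - C))) =
      (-1) ^ (card B + 1) * K r g B c X"
      unfolding K_rec[OF X aB] by (simp only: distrib_left sum_distrib_left)
  qed
  finally show ?case .
qed

end



lemma Rfun_W: "Rfun r n t t0 = W r t t0 {1..n}"
proof -
  have cp: "compositions n = comps {1..n}" by (simp add: compositions_def comps_def)
  show ?thesis
    unfolding Rfun_def W_def cp
  proof (rule sum.cong[OF refl])
    fix \<gamma> assume g: "\<gamma> \<in> comps {1..n}"
    have sub: "\<Union>(set (take k \<gamma>)) \<subseteq> {1..n}" for k using g set_take_subset unfolding comps_def by fastforce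
    have "(\<Prod>i\<in>insert 0 (\<Union>(set (take k \<gamma>))). (if i = 0 then t0 else t i)) = t0 * prod t (\<Union>(set (take k \<gamma>)))" for k
    proof -
      have f: "finite (\<Union>(set (take k \<gamma>)))" by (rule finite_subset[OF sub]) simp
      have n0: "0 \<notin> \<Union>(set (take k \<gamma>))" using sub[of k] by auto
      have "(\<Prod>i\<in>insert 0 (\<Union>(set (take k \<gamma>))). (if i = 0 then t0 else t i)) =
            t0 * (\<Prod>i\<in>\<Union>(set (take k \<gamma>)). (if i = 0 then t0 else t i))"
        using f n0 by simp
      also have "(\<Prod>i\<in>\<Union>(set (take k \<gamma>)). (if i = 0 then t0 else t i)) = prod t (\<Union>(set (take k \<gamma>)))"
        using n0 by (intro prod.cong) auto
      finally show ?thesis .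
    qed
    moreover have cn: "card {1..n} = n" by simp
    ultimately show "(-1) ^ (n + length \<gamma>) * (\<Prod>k<length \<gamma>. r (\<Prod>i\<in>insert 0 (\<Union>(set (take k \<gamma>))). (if i = 0 then t0 else t i)) (card (\<gamma> ! k))) =
      (-1) ^ (card {1..n} + length \<gamma>) * (\<Prod>k<length \<gamma>. r (t0 * prod t (\<Union>(set (take k \<gamma>)))) (card (\<gamma> ! k)))"
      by (simp only: cn)
  qed
qed

lemma ik_eq: "linorder.insort_key (\<le>) f x xs = insort_key (f :: 'b \<Rightarrow> 'a::linorder) x xs"
  by (induction xs) (simp_all add: linorder.insort_key.simps[OF linorder_class.linorder_axioms])

lemma skl_eq: "linorder.sorted_key_list_of_set (\<le>) = (sorted_key_list_of_set :: ('b \<Rightarrow> 'a::linorder) \<Rightarrow> _)"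
proof -
  have "linorder.insort_key (\<le>) = (insort_key :: ('b \<Rightarrow> 'a::linorder) \<Rightarrow> _)" by (intro ext ik_eq)
  then show ?thesis
    by (intro ext) (simp add: linorder.sorted_key_list_of_set_def[OF linorder_class.linorder_axioms] sorted_key_list_of_set_def)
qed

lemma skl_props: "inj_on Min (P::nat set set) \<Longrightarrow> finite P \<Longrightarrow> set (sorted_key_list_of_set Min P) = P \<and> length (sorted_key_list_of_set Min P) = card P \<and> distinct (sorted_key_list_of_set Min P)"
proof -
  assume i: "inj_on Min (P::nat set set)" and f: "finite P"
  interpret fik: folding_insort_key "(\<le>)" "(<)" P Min by unfold_locales (rule i)
  show ?thesis using fik.set_sorted_key_list_of_set[OF subset_refl f] fik.length_sorted_key_list_of_set[OF subset_refl]
     fik.distinct_if_distinct_map[OF fik.distinct_sorted_key_list_of_set[OF subset_refl]] unfolding skl_eq by simp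
qed

lemma Rpart_W:
  assumes P: "partition_on {1..n} \<pi>"
  shows "Rpart r \<pi> t t0 = W r (\<lambda>b. prod t b) t0 \<pi>"
proof -
  have U: "\<Union>\<pi> = {1..n}" and ne: "{} \<notin> \<pi>" and dj: "disjoint \<pi>" using P by (auto simp: partition_on_def)
  have fin: "finite \<pi>" by (rule finite_subset[of _ "Pow {1..n}"]) (use U in auto)
  have finb: "finite b" if "b \<in> \<pi>" for b by (rule finite_subset[of _ "{1..n}"]) (use U that in auto)
  have inj: "inj_on Min \<pi>"
  proof (rule inj_onI)
    fix b1 b2 assume b: "b1 \<in> \<pi>" "b2 \<in> \<pi>" "Min b1 = Min b2"
    have "b1 \<noteq> {}" "b2 \<noteq> {}" using ne b by auto
    then have "Min b1 \<in> b1" "Min b2 \<in> b2" using Min_in finb b(1,2) by blast+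
    then have "\<not> disjnt b1 b2" using b(3) by (auto simp: disjnt_def)
    then show "b1 = b2" using dj b(1,2) by (auto simp: pairwise_def)
  qed
  define bs where "bs = sorted_key_list_of_set Min \<pi>"
  have sb: "set bs = \<pi>" and lb: "length bs = card \<pi>" and db: "distinct bs"
    unfolding bs_def using skl_props[OF inj fin] by auto
  define h where "h j = bs ! (j - 1)" for j
  have hinj: "inj_on h {1..card \<pi>}"
    unfolding h_def using db lb by (auto simp: inj_on_def nth_eq_iff_index_eq)
  have himg: "h ` {1..card \<pi>} = \<pi>"
  proof
    show "h ` {1..card \<pi>} \<subseteq> \<pi>" unfolding h_def using lb sb by (auto intro!: nth_mem)
    show "\<pi> \<subseteq> h ` {1..card \<pi>}"
    proof
      fix b assume "b \<in> \<pi>"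
      then obtain i where i: "i < length bs" "bs ! i = b" using sb by (auto simp: in_set_conv_nth)
      then have "Suc i \<in> {1..card \<pi>}" "h (Suc i) = b" using lb by (auto simp: h_def)
      then show "b \<in> h ` {1..card \<pi>}" by blast
    qed
  qed
  have "Rpart r \<pi> t t0 = Rfun r (card \<pi>) (\<lambda>j. prod t (h j)) t0"
    by (simp only: Rpart_def Let_def h_def bs_def)
  also have "\<dots> = W r ((\<lambda>b. prod t b) \<circ> h) t0 {1..card \<pi>}" by (simp add: Rfun_W comp_def)
  also have "\<dots> = W r (\<lambda>b. prod t b) t0 (h ` {1..card \<pi>})" by (rule W_reindex[symmetric]) (use hinj in auto)
  finally show ?thesis unfolding himg .
qed

lemma circ_char:
  assumes n: "n \<ge> 1"
  shows "set_partitions_circ n = (\<lambda>B. insert B ((\<lambda>x. {x}) ` ({1..n} - B))) ` {B. 1 \<in> B \<and> B \<subseteq> {1..n}}"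
    (is "?P = ?f ` ?A")
proof
  show "?f ` ?A \<subseteq> ?P"
  proof
    fix \<pi> assume "\<pi> \<in> ?f ` ?A"
    then obtain B where B: "1 \<in> B" "B \<subseteq> {1..n}" and pi: "\<pi> = ?f B" by auto
    have part: "partition_on {1..n} \<pi>"
    proof (rule partition_onI)
      show "\<Union>\<pi> = {1..n}" using B pi by auto
      show "{} \<notin> \<pi>" using B pi by auto
      fix p q assume "p \<in> \<pi>" "q \<in> \<pi>" "p \<noteq> q"
      then show "disjnt p q" using pi by (auto simp: disjnt_def)
    qed
    have big: "b = B" if "b \<in> \<pi>" "card b > 1" for b
      using that pi by auto
    show "\<pi> \<in> ?P" unfolding set_partitions_circ_def set_partitions_def
      using part big B by auto
  qed
next
  show "?P \<subseteq> ?f ` ?A"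
  proof
    fix \<pi> assume "\<pi> \<in> ?P"
    then have P: "partition_on {1..n} \<pi>" and one: "\<And>b. b \<in> \<pi> \<Longrightarrow> card b > 1 \<Longrightarrow> 1 \<in> b"
      unfolding set_partitions_circ_def set_partitions_def by auto
    have U: "\<Union>\<pi> = {1..n}" and ne: "{} \<notin> \<pi>" and dj: "disjoint \<pi>" using P by (auto simp: partition_on_def)
    have same: "b1 = b2" if "b1 \<in> \<pi>" "b2 \<in> \<pi>" "x \<in> b1" "x \<in> b2" for b1 b2 x
      using dj that by (auto simp: pairwise_def disjnt_def)
    obtain B where B: "B \<in> \<pi>" "1 \<in> B" using U n by (metis UnionE atLeastAtMost_iff order_refl)
    have BX: "B \<subseteq> {1..n}" using B U by auto
    have sing: "\<exists>x. b = {x}" if "b \<in> \<pi>" "b \<noteq> B" for b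
    proof -
      have "finite b" by (rule finite_subset[of _ "{1..n}"]) (use U that in auto)
      moreover have "b \<noteq> {}" using ne that by auto
      moreover have "\<not> card b > 1" using one[OF that(1)] same[OF that(1) B(1) _ B(2)] that(2) by auto
      ultimately have "card b = 1" by (metis card_0_eq less_one linorder_neqE_nat)
      then show ?thesis by (rule card_1_singletonE) auto
    qed
    have "\<pi> = ?f B"
    proof
      show "\<pi> \<subseteq> ?f B"
      proof
        fix b assume b: "b \<in> \<pi>"
        show "b \<in> ?f B"
        proof (cases "b = B")
          case False
          then obtain x where x: "b = {x}" using sing b by blast
          have "x \<in> {1..n}" using U b x by auto
          moreover have "x \<notin> B" using same[OF b B(1), of x] x False by auto
          ultimately show ?thesis using x by auto
        qed simp
      qed
      show "?f B \<subseteq> \<pi>"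
      proof
        fix b assume "b \<in> ?f B"
        then consider "b = B" | x where "x \<in> {1..n}" "x \<notin> B" "b = {x}" by auto
        then show "b \<in> \<pi>"
        proof cases
          case 1 then show ?thesis using B by simp
        next
          case 2
          then have "x \<in> \<Union>\<pi>" using U by simp
          then obtain c where c: "c \<in> \<pi>" "x \<in> c" by blast
          then have "c \<noteq> B" using 2 by auto
          then obtain y where "c = {y}" using sing c by blast
          then show ?thesis using c 2 by auto
        qed
      qed
    qed
    then show "\<pi> \<in> ?f ` ?A" using B BX by auto
  qed
qed

lemma circ_inj:
  "inj_on (\<lambda>B. insert B ((\<lambda>x. {x}) ` ({1..n} - B))) {B. 1 \<in> B \<and> B \<subseteq> {1..n::nat}}"
proof (rule inj_onI)
  fix B1 B2 assume B: "B1 \<in> {B. 1 \<in> B \<and> B \<subseteq> {1..n::nat}}" "B2 \<in> {B. 1 \<in> B \<and> B \<subseteq> {1..n}}"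
    and e: "insert B1 ((\<lambda>x. {x}) ` ({1..n} - B1)) = insert B2 ((\<lambda>x. {x}) ` ({1..n} - B2))"
  have "B1 \<in> insert B2 ((\<lambda>x. {x}) ` ({1..n} - B2))" using e by blast
  then show "B1 = B2"
  proof
    assume "B1 \<in> (\<lambda>x. {x}) ` ({1..n} - B2)"
    then obtain x where "B1 = {x}" "x \<notin> B2" by auto
    then show ?thesis using B by auto
  qed
qed

theorem theorem10p1:
  fixes q t0 :: complex and r :: "complex \<Rightarrow> nat \<Rightarrow> complex"
    and t :: "nat \<Rightarrow> complex" and n :: nat
  assumes hq: "q \<noteq> 0"
    and hr0: "\<And>x. x \<noteq> 0 \<Longrightarrow> r x 0 = 1"
    and hrq: "\<And>x m. x \<noteq> 0 \<Longrightarrow>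
               r (q * x) m = (\<Sum>i=0..m. (-1) ^ i * of_nat (m choose i) * r x (m - i))"
    and hn: "n \<ge> 1"
    and ht0: "t0 \<noteq> 0"
    and ht: "\<And>i. 1 \<le> i \<Longrightarrow> i \<le> n \<Longrightarrow> t i \<noteq> 0"
  shows "Rfun r n (t(1 := q * t 1)) t0 =
         (\<Sum>\<pi>\<in>set_partitions_circ n. (-1) ^ (n + card \<pi>) * Rpart r \<pi> t t0)"
proof -
  let ?f = "\<lambda>B. insert B ((\<lambda>x. {x}) ` ({1..n} - B))"
  let ?A = "{B. 1 \<in> B \<and> B \<subseteq> {1..n::nat}}"
  have "Rfun r n (t(1 := q * t 1)) t0 = W r (t(1 := q * t 1)) t0 {1..n}" by (rule Rfun_W)
  also have "\<dots> = (\<Sum>B\<in>?A. (-1) ^ (card B + 1) * K r t B t0 {1..n})"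
    by (rule L2[where r=r and q=q, OF hr0 hrq]) (use hn ht0 ht in auto)
  also have "\<dots> = (\<Sum>B\<in>?A. (-1) ^ (n + card (?f B)) * Rpart r (?f B) t t0)"
  proof (rule sum.cong[OF refl])
    fix B assume B: "B \<in> ?A"
    have P: "partition_on {1..n} (?f B)" using circ_char[OF hn] B
      unfolding set_partitions_circ_def set_partitions_def by blast
    have fB: "finite B" by (rule finite_subset[of _ "{1..n}"]) (use B in auto)
    have cB: "card B \<le> n" using card_mono[of "{1..n}" B] B by auto
    have "B \<notin> (\<lambda>x. {x}) ` ({1..n} - B)" using B by auto
    moreover have "card ((\<lambda>x. {x}) ` ({1..n} - B)) = n - card B"
      using B fB by (subst card_image) (auto simp: inj_on_def card_Diff_subset)
    ultimately have c: "card (?f B) = n - card B + 1" by simp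
    have "even (n + (n - card B + 1) + (card B + 1))" using cB by presburger
    then have s: "(-1::complex) ^ (n + card (?f B)) = (-1) ^ (card B + 1)"
      unfolding c by (rule neg1_pow_eq)
    show "(-1) ^ (card B + 1) * K r t B t0 {1..n} = (-1) ^ (n + card (?f B)) * Rpart r (?f B) t t0"
      unfolding s Rpart_W[OF P] K_def ..
  qed
  also have "\<dots> = (\<Sum>\<pi>\<in>set_partitions_circ n. (-1) ^ (n + card \<pi>) * Rpart r \<pi> t t0)"
    unfolding circ_char[OF hn] by (rule sum.reindex[OF circ_inj, symmetric, unfolded comp_def])
  finally show ?thesis .
qed


end
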